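(* Let $d=1$ and let $\mathcal{U}$ be an update family on $\mathbb{Z}$ for which $-1$ is a stable direction (i.e. no $X\in\mathcal{U}$ satisfies $X\subset\{1,2,3,\dots\}$). Let $n\ge1$ and assume $\mathcal{H}_{n-1}$ holds. Then for every $\Lambda\subset\mathbb{Z}$ with $\mathcal{P}_n\subset\Lambda$ and every $\eta\in V(n,\Lambda)\setminus\{1_\Lambda\}$, $\eta$ has at least one zero in $\Lambda\setminus\mathcal{P}_{n-1}$.
   Context: An update family is a set $\mathcal{U}$ of finitely many finite nonempty subsets of $\mathbb{Z}\setminus\{0\}$. For $\Lambda\subset\mathbb{Z}$, configurations are elements of $\{0,1\}^\Lambda$; $1_\Lambda$ is the all-ones configuration; $\eta^s$ is $\eta$ with the state at $s$ flipped. A move from $\eta$ to $\eta'$ is legal if $\eta'=\eta$, or $\eta'=\eta^s$ for some $s\in\Lambda$ and some $X\in\mathcal{U}$ has all sites of $s+X$ in state $0$ in the configuration equal to $\eta$ on $\Lambda$ and $0$ outside $\Lambda$. A legal path is a finite sequence $(\eta^j)_{0\le j\le m}$, $m\ge 1$, with all consecutive moves legal; it is $n$-legal if every $\eta^j$ has at most $n$ zeroes in $\Lambda$. $V(n,\Lambda)$ is the set of configurations reachable from $1_\Lambda$ by an $n$-legal path. Let $r=\max\{|x-y| : x,y\in X\cup\{0\}, X\in\mathcal{U}\}$, and for $n\in\mathbb{N}$ let $a_n=r(2^n-1)$, $b_n=rn2^{n-1}$, $\mathcal{P}_n=\{-a_n,\dots,b_n\}$. $\mathcal{H}_n$ denotes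 the statement: for every $\Lambda\subset\mathbb{Z}$ with $\mathcal{P}_n\subset\Lambda$ and every $\eta\in V(n,\Lambda)$, $\eta_0=1$. *)

theory Defs
  imports Main
begin

definition update_family :: "int set set \<Rightarrow> bool" where
  "update_family U \<longleftrightarrow> finite U \<and> (\<forall>X\<in>U. finite X \<and> X \<noteq> {} \<and> 0 \<notin> X)"

(* Configurations in {0,1}^Lambda are modelled as functions int => bool
   (True = state 1, False = state 0) that are normalised to True outside Lambda. *)
definition config :: "int set \<Rightarrow> (int \<Rightarrow> bool) \<Rightarrow> bool" where
  "config \<Lambda> \<eta> \<longleftrightarrow> (\<forall>x. x \<notin> \<Lambda> \<longrightarrow> \<eta> x)"

definition ones :: "int \<Rightarrow> bool" where
  "ones = (\<lambda>_. True)"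

definition zeros :: "int set \<Rightarrow> (int \<Rightarrow> bool) \<Rightarrow> int set" where
  "zeros \<Lambda> \<eta> = {x \<in> \<Lambda>. \<not> \<eta> x}"

definition flip :: "(int \<Rightarrow> bool) \<Rightarrow> int \<Rightarrow> (int \<Rightarrow> bool)" where
  "flip \<eta> s = \<eta>(s := \<not> \<eta> s)"

(* some X in U has s+X entirely in state 0, where eta is extended by 0 outside Lambda *)
definition constraint :: "int set set \<Rightarrow> int set \<Rightarrow> (int \<Rightarrow> bool) \<Rightarrow> int \<Rightarrow> bool" where
  "constraint U \<Lambda> \<eta> s \<longleftrightarrow> (\<exists>X\<in>U. \<forall>x\<in>X. s + x \<in> \<Lambda> \<longrightarrow> \<not> \<eta> (s + x))"

definition legal_move :: "int set set \<Rightarrow> int set \<Rightarrow> (int \<Rightarrow> bool) \<Rightarrow> (int \<Rightarrow> bool) \<Rightarrow> bool" where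
  "legal_move U \<Lambda> \<eta> \<eta>' \<longleftrightarrow>
     \<eta>' = \<eta> \<or> (\<exists>s\<in>\<Lambda>. \<eta>' = flip \<eta> s \<and> constraint U \<Lambda> \<eta> s)"

definition at_most_zeros :: "nat \<Rightarrow> int set \<Rightarrow> (int \<Rightarrow> bool) \<Rightarrow> bool" where
  "at_most_zeros n \<Lambda> \<eta> \<longleftrightarrow> finite (zeros \<Lambda> \<eta>) \<and> card (zeros \<Lambda> \<eta>) \<le> n"

definition n_legal_path :: "int set set \<Rightarrow> nat \<Rightarrow> int set \<Rightarrow> (nat \<Rightarrow> int \<Rightarrow> bool) \<Rightarrow> nat \<Rightarrow> bool" where
  "n_legal_path U n \<Lambda> p m \<longleftrightarrow> m \<ge> 1 \<and>
     (\<forall>j\<le>m. config \<Lambda> (p j) \<and> at_most_zeros n \<Lambda> (p j)) \<and>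
     (\<forall>j<m. legal_move U \<Lambda> (p j) (p (Suc j)))"

definition V :: "int set set \<Rightarrow> nat \<Rightarrow> int set \<Rightarrow> (int \<Rightarrow> bool) set" where
  "V U n \<Lambda> = {\<eta>. \<exists>p m. n_legal_path U n \<Lambda> p m \<and> p 0 = ones \<and> p m = \<eta>}"

definition range_r :: "int set set \<Rightarrow> int" where
  "range_r U = Max {\<bar>x - y\<bar> | x y X. X \<in> U \<and> x \<in> insert 0 X \<and> y \<in> insert 0 X}"

definition a_seq :: "int set set \<Rightarrow> nat \<Rightarrow> int" where
  "a_seq U n = range_r U * (2 ^ n - 1)"

definition b_seq :: "int set set \<Rightarrow> nat \<Rightarrow> int" where
  "b_seq U n = range_r U * int n * 2 ^ (n - 1)"

definition P_set :: "int set set \<Rightarrow> nat \<Rightarrow> int set" where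
  "P_set U n = {- a_seq U n .. b_seq U n}"

definition H :: "int set set \<Rightarrow> nat \<Rightarrow> bool" where
  "H U n \<longleftrightarrow> (\<forall>\<Lambda>. P_set U n \<subseteq> \<Lambda> \<longrightarrow> (\<forall>\<eta>\<in>V U n \<Lambda>. \<eta> 0))"

end

theory Submission
  imports Defs
begin

definition estep :: "int \<Rightarrow> int set \<Rightarrow> int set \<Rightarrow> int set \<Rightarrow> bool" where
  "estep r \<Lambda> A B \<longleftrightarrow> A = B \<or> (\<exists>s\<in>\<Lambda>. (\<forall>x. x \<noteq> s \<longrightarrow> (x\<in>A \<longleftrightarrow> x\<in>B)) \<and>
      (\<exists>y. s - r \<le> y \<and> y < s \<and> (y \<notin> \<Lambda> \<or> y \<in> A)))"

definition epath :: "int \<Rightarrow> int set \<Rightarrow> nat \<Rightarrow> (nat \<Rightarrow> int set) \<Rightarrow> nat \<Rightarrow> bool" where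
  "epath r \<Lambda> k q M \<longleftrightarrow> (\<forall>t\<le>M. q t \<subseteq> \<Lambda> \<and> finite (q t) \<and> card (q t) \<le> k) \<and>
      (\<forall>t<M. estep r \<Lambda> (q t) (q (Suc t)))"

lemma estep_sym: "estep r \<Lambda> A B \<Longrightarrow> estep r \<Lambda> B A"
  unfolding estep_def
  apply (elim disjE)
   apply simp
  apply (rule disjI2)
  apply (elim bexE conjE exE)
  subgoal for s y
    apply (rule bexI[of _ s])
     apply (intro conjI)
      apply blast
     apply (rule exI[of _ y])
     apply auto
    done
  done

lemma estep_restrict:
  assumes st: "estep r \<Lambda> A B" and sub: "\<Lambda>2 \<subseteq> \<Lambda>"
  shows "estep r \<Lambda>2 (A \<inter> \<Lambda>2) (B \<inter> \<Lambda>2)"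
proof (cases "A = B")
  case True thus ?thesis unfolding estep_def by simp
next
  case False
  then obtain s y where h: "s \<in> \<Lambda>" "\<forall>x. x \<noteq> s \<longrightarrow> (x \<in> A) = (x \<in> B)" "s - r \<le> y" "y < s"
    "y \<notin> \<Lambda> \<or> y \<in> A" using st unfolding estep_def by blast
  show ?thesis
  proof (cases "s \<in> \<Lambda>2")
    case True
    have "y \<notin> \<Lambda>2 \<or> y \<in> A \<inter> \<Lambda>2" using h(5) sub by blast
    moreover have "\<forall>x. x \<noteq> s \<longrightarrow> (x \<in> A \<inter> \<Lambda>2) = (x \<in> B \<inter> \<Lambda>2)" using h(2) by blast
    ultimately show ?thesis unfolding estep_def using True h(3,4) by blast
  next
    case False
    have "A \<inter> \<Lambda>2 = B \<inter> \<Lambda>2"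
    proof (intro set_eqI iffI)
      fix x assume "x \<in> A \<inter> \<Lambda>2" thus "x \<in> B \<inter> \<Lambda>2" using h(2) False by (metis IntD1 IntD2 IntI)
    next
      fix x assume "x \<in> B \<inter> \<Lambda>2" thus "x \<in> A \<inter> \<Lambda>2" using h(2) False by (metis IntD1 IntD2 IntI)
    qed
    thus ?thesis unfolding estep_def by simp
  qed
qed

lemma epath_restrict:
  assumes "epath r \<Lambda> k q M" "\<Lambda>2 \<subseteq> \<Lambda>" "\<And>t. t \<le> M \<Longrightarrow> card (q t \<inter> \<Lambda>2) \<le> k2"
  shows "epath r \<Lambda>2 k2 (\<lambda>t. q t \<inter> \<Lambda>2) M"
  unfolding epath_def
proof (intro conjI allI impI)
  fix t assume t: "t \<le> M"
  show "q t \<inter> \<Lambda>2 \<subseteq> \<Lambda>2" by blast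
  show "finite (q t \<inter> \<Lambda>2)" using assms(1) t unfolding epath_def by blast
  show "card (q t \<inter> \<Lambda>2) \<le> k2" using assms(3) t by blast
next
  fix t assume t: "t < M"
  then show "estep r \<Lambda>2 (q t \<inter> \<Lambda>2) (q (Suc t) \<inter> \<Lambda>2)"
    using assms(1,2) estep_restrict unfolding epath_def by blast
qed

lemma epath_shift:
  assumes "epath r \<Lambda> k q M" "i \<le> j" "j \<le> M"
  shows "epath r \<Lambda> k (\<lambda>s. q (i+s)) (j-i)"
  using assms unfolding epath_def by auto

lemma epath_rev:
  assumes "epath r \<Lambda> k q M" "i \<le> j" "j \<le> M"
  shows "epath r \<Lambda> k (\<lambda>s. q (j-s)) (j-i)"
proof -
  have A: "\<forall>t\<le>M. q t \<subseteq> \<Lambda> \<and> finite (q t) \<and> card (q t) \<le> k"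
    using assms(1) unfolding epath_def by blast
  have B: "\<forall>t<M. estep r \<Lambda> (q t) (q (Suc t))"
    using assms(1) unfolding epath_def by blast
  have C: "q (j - t) \<subseteq> \<Lambda> \<and> finite (q (j - t)) \<and> card (q (j - t)) \<le> k" for t
  proof -
    have "j - t \<le> M" using assms(3) by (meson diff_le_self le_trans)
    thus ?thesis using A by blast
  qed
  have D: "estep r \<Lambda> (q (j - t)) (q (j - Suc t))" if t: "t < j - i" for t
  proof -
    have "j - Suc t < M" using assms t by linarith
    hence "estep r \<Lambda> (q (j - Suc t)) (q (Suc (j - Suc t)))" using B by blast
    moreover have "Suc (j - Suc t) = j - t" using t by auto
    ultimately show ?thesis using estep_sym by metis
  qed
  show ?thesis unfolding epath_def using C D by blast
qed

lemma last_time: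
  assumes "P i" "i \<le> (T::nat)"
  shows "\<exists>t. i \<le> t \<and> t \<le> T \<and> P t \<and> (\<forall>s. t < s \<and> s \<le> T \<longrightarrow> \<not> P s)"
  using assms
proof (induction T)
  case 0 thus ?case by auto
next
  case (Suc T)
  show ?case
  proof (cases "P (Suc T)")
    case True thus ?thesis using Suc.prems by auto
  next
    case False
    then have "i \<le> T" using Suc.prems by (metis le_Suc_eq)
    from Suc.IH[OF Suc.prems(1) this] obtain t where
      "i \<le> t" "t \<le> T" "P t" "\<forall>s. t < s \<and> s \<le> T \<longrightarrow> \<not> P s" by blast
    thus ?thesis using False by (metis le_Suc_eq le_SucI)
  qed
qed

lemma card_minus_one: "finite A \<Longrightarrow> u \<in> A \<Longrightarrow> B \<subseteq> A - {u} \<Longrightarrow> card B \<le> card A - 1"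
  by (metis card_Diff_singleton card_mono finite_Diff)


lemma epath_card: "epath r \<Lambda> k q M \<Longrightarrow> t \<le> M \<Longrightarrow> finite (q t) \<and> card (q t) \<le> k \<and> q t \<subseteq> \<Lambda>"
  unfolding epath_def by blast

lemma epath_step: "epath r \<Lambda> k q M \<Longrightarrow> t < M \<Longrightarrow> estep r \<Lambda> (q t) (q (Suc t))"
  unfolding epath_def by blast

lemma east:
  assumes "epath r \<Lambda> k q M" "0 \<le> r" "{\<beta>+1..\<gamma>} \<subseteq> \<Lambda>" "q 0 \<inter> {\<beta>+1..\<gamma>} = {}" "t \<le> M"
  shows "q t \<inter> {\<beta> + r*(2^k-1)+1..\<gamma>} = {}"
  using assms
proof (induction k arbitrary: \<Lambda> q M \<beta> \<gamma> t)
  case 0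
  have "finite (q t)" "card (q t) \<le> 0" using epath_card[OF 0(1) 0(5)] by auto
  hence "q t = {}" by simp
  thus ?case by simp
next
  case (Suc k)
  define a' where "a' = r*(2^k-1)"
  have a'0: "0 \<le> a'" unfolding a'_def using Suc.prems(2) by simp
  have aS: "r*(2^Suc k - 1) = 2*a' + r" by (simp add: a'_def algebra_simps)
  show ?case
  proof (rule ccontr)
    assume "q t \<inter> {\<beta> + r*(2^Suc k-1)+1..\<gamma>} \<noteq> {}"
    then obtain x where x0: "x \<in> q t" "\<beta> + r*(2^Suc k-1)+1 \<le> x" "x \<le> \<gamma>" by auto
    have x: "x \<in> q t" "\<beta> + 2*a' + r + 1 \<le> x" "x \<le> \<gamma>" using x0 aS by linarith+
    define b' where "b' = \<beta> + a' + r"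
    define Y where "Y = {b'+1..\<gamma>}"
    have YL: "Y \<subseteq> {\<beta>+1..\<gamma>}" unfolding Y_def b'_def using a'0 Suc.prems(2) by auto
    have q0Y: "q 0 \<inter> Y = {}" using Suc.prems(4) YL by blast
    obtain T1 where T1: "0 \<le> T1" "T1 \<le> t" "q T1 \<inter> Y = {}" "\<forall>s. T1 < s \<and> s \<le> t \<longrightarrow> \<not> q s \<inter> Y = {}"
      using last_time[of "\<lambda>s. q s \<inter> Y = {}" 0 t] q0Y by blast
    have xY: "x \<in> Y" unfolding Y_def b'_def using x a'0 by auto
    have "T1 \<noteq> t" using T1(3) xY x(1) by blast
    hence T1t: "T1 < t" using T1(2) by simp
    show False
    proof (cases "\<forall>s. T1 < s \<and> s \<le> t \<longrightarrow> q s \<inter> {..b'} \<noteq> {}")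
      case True
      have p2: "epath r Y k (\<lambda>s. q (T1+s) \<inter> Y) (t - T1)"
      proof (rule epath_restrict[OF epath_shift[OF Suc.prems(1) T1(2) Suc.prems(5)]])
        show "Y \<subseteq> \<Lambda>" using YL Suc.prems(3) by blast
        fix s assume s: "s \<le> t - T1"
        show "card (q (T1 + s) \<inter> Y) \<le> k"
        proof (cases "s = 0")
          case True thus ?thesis using T1(3) by simp
        next
          case False
          have "T1 < T1 + s \<and> T1 + s \<le> t" using False s T1t by linarith
          hence "q (T1+s) \<inter> {..b'} \<noteq> {}" using True by blast
          then obtain z where z: "z \<in> q (T1+s)" "z \<le> b'" by blast
          have "T1 + s \<le> M" using s T1t Suc.prems(5) by linarith
          hence fin: "finite (q (T1+s))" "card (q (T1+s)) \<le> Suc k"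
            using epath_card[OF Suc.prems(1)] by blast+
          have "q (T1 + s) \<inter> Y \<subseteq> q (T1+s) - {z}" using z unfolding Y_def by auto
          hence "card (q (T1 + s) \<inter> Y) \<le> card (q (T1+s)) - 1" by (rule card_minus_one[OF fin(1) z(1)])
          thus ?thesis using fin by linarith
        qed
      qed
      have h1: "{b'+1..\<gamma>} \<subseteq> Y" unfolding Y_def by (rule order_refl)
      have h2: "(\<lambda>s. q (T1+s) \<inter> Y) 0 \<inter> {b'+1..\<gamma>} = {}" using T1(3) by simp
      have "(\<lambda>s. q (T1+s) \<inter> Y) (t - T1) \<inter> {b' + r*(2^k-1)+1..\<gamma>} = {}"
        by (rule Suc.IH[OF p2 Suc.prems(2) h1 h2 order_refl])
      hence "(q (T1 + (t - T1)) \<inter> Y) \<inter> {b' + r*(2^k-1)+1..\<gamma>} = {}" by simp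
      moreover have "T1 + (t - T1) = t" using T1t by simp
      moreover have "x \<in> {b' + r*(2^k-1)+1..\<gamma>}" using x unfolding b'_def a'_def[symmetric] by simp
      ultimately show False using x xY by auto
    next
      case False
      then obtain s0 where s0: "T1 < s0" "s0 \<le> t" "q s0 \<inter> {..b'} = {}" by blast
      have ne: "q s0 \<inter> Y \<noteq> {}" using T1(4) s0 by blast
      have "s0 \<le> M" using s0(2) Suc.prems(5) by linarith
      hence fin: "finite (q s0)" using epath_card[OF Suc.prems(1)] by auto
      define u where "u = Min (q s0)"
      have u_in: "u \<in> q s0" unfolding u_def using fin ne by (intro Min_in) auto
      have u_le: "\<forall>z\<in>q s0. u \<le> z" unfolding u_def using fin by auto
      have ub: "b' < u" using u_in s0(3) by auto
      obtain z where "z \<in> q s0 \<inter> Y" using ne by blast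
      hence ug: "u \<le> \<gamma>" using u_le unfolding Y_def by fastforce
      have uY: "u \<in> Y" unfolding Y_def using ub ug by auto
      have uT1: "u \<notin> q T1" using T1(3) uY by blast
      have "T1 \<le> s0 - 1" using s0(1) by linarith
      from last_time[of "\<lambda>s. u \<notin> q s", OF uT1 this] obtain t' where t': "T1 \<le> t'" "t' \<le> s0 - 1" "u \<notin> q t'" "\<forall>s. t' < s \<and> s \<le> s0 - 1 \<longrightarrow> \<not> u \<notin> q s"
        by blast
      have ts0: "t' < s0" using t' s0 by linarith
      have uin: "\<forall>s. t' < s \<and> s \<le> s0 \<longrightarrow> u \<in> q s"
      proof (intro allI impI)
        fix s assume "t' < s \<and> s \<le> s0"
        thus "u \<in> q s"
        proof (cases "s = s0")
          case True thus ?thesis using u_in by simp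
        next
          case False
          hence "s \<le> s0 - 1" using \<open>t' < s \<and> s \<le> s0\<close> by linarith
          thus ?thesis using t'(4) \<open>t' < s \<and> s \<le> s0\<close> by blast
        qed
      qed
      have uS: "u \<in> q (Suc t')" using uin ts0 by auto
      have "t' < M" using ts0 s0(2) Suc.prems(5) by linarith
      hence st: "estep r \<Lambda> (q t') (q (Suc t'))" using epath_step[OF Suc.prems(1)] by auto
      have "q t' \<noteq> q (Suc t')" using uS t'(3) by blast
      then obtain sf y where sy: "sf \<in> \<Lambda>" "\<forall>x. x \<noteq> sf \<longrightarrow> (x \<in> q t') = (x \<in> q (Suc t'))" "sf - r \<le> y" "y < sf"
        "y \<notin> \<Lambda> \<or> y \<in> q t'" using st unfolding estep_def by blast
      have sfu: "sf = u" using sy(2) uS t'(3) by metis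
      have yr: "\<beta> + a' + 1 \<le> y" "y \<le> u - 1" using sy(3,4) sfu ub unfolding b'_def by auto
      have "y \<in> \<Lambda>" using yr a'0 ug Suc.prems(3) by auto
      hence yq: "y \<in> q t'" using sy(5) by blast
      define W where "W = {\<beta>+1..u-1}"
      have p3: "epath r W k (\<lambda>s. q (s0 - s) \<inter> W) (s0 - t')"
      proof (rule epath_restrict[OF epath_rev[OF Suc.prems(1) less_imp_le[OF ts0]]])
        show "s0 \<le> M" using s0(2) Suc.prems(5) by simp
        show "W \<subseteq> \<Lambda>" using Suc.prems(3) ug unfolding W_def by auto
        fix s assume s: "s \<le> s0 - t'"
        show "card (q (s0 - s) \<inter> W) \<le> k"
        proof (cases "t' < s0 - s")
          case True
          have uv: "u \<in> q (s0 - s)" using uin True by auto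
          have "s0 - s \<le> M" using s0(2) Suc.prems(5) by linarith
          hence fin: "finite (q (s0-s))" "card (q (s0-s)) \<le> Suc k"
            using epath_card[OF Suc.prems(1)] by auto
          have "q (s0 - s) \<inter> W \<subseteq> q (s0-s) - {u}" unfolding W_def by auto
          hence "card (q (s0 - s) \<inter> W) \<le> card (q (s0-s)) - 1" by (rule card_minus_one[OF fin(1) uv])
          thus ?thesis using fin by linarith
        next
          case False
          hence eq: "s0 - s = t'" using s ts0 by linarith
          have "Suc t' \<le> M" using ts0 s0(2) Suc.prems(5) by linarith
          hence fin: "finite (q (Suc t'))" "card (q (Suc t')) \<le> Suc k"
            using epath_card[OF Suc.prems(1)] by auto
          have "q t' \<inter> W \<subseteq> q (Suc t') - {u}" using sy(2) sfu unfolding W_def by auto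
          hence "card (q t' \<inter> W) \<le> card (q (Suc t')) - 1" by (rule card_minus_one[OF fin(1) uS])
          thus ?thesis using fin eq by simp
        qed
      qed
      have q3: "(\<lambda>s. q (s0 - s) \<inter> W) 0 \<inter> {\<beta>+1..u-1} = {}" using u_le unfolding W_def by force
      have h3: "{\<beta>+1..u-1} \<subseteq> W" unfolding W_def by (rule order_refl)
      have "(\<lambda>s. q (s0 - s) \<inter> W) (s0 - t') \<inter> {\<beta> + r*(2^k-1)+1..u-1} = {}"
        by (rule Suc.IH[OF p3 Suc.prems(2) h3 q3 order_refl])
      moreover have "s0 - (s0 - t') = t'" using ts0 by simp
      moreover have "y \<in> {\<beta> + r*(2^k-1)+1..u-1}" using yr unfolding a'_def[symmetric] by simp
      moreover have "y \<in> W" using yr a'0 unfolding W_def by simp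
      ultimately show False using yq by auto
    qed
  qed
qed


lemma range_fin:
  assumes "update_family U"
  shows "finite {\<bar>x - y\<bar> | x y X. X \<in> U \<and> x \<in> insert 0 X \<and> y \<in> insert 0 X}"
proof -
  have "{\<bar>x - y\<bar> | x y X. X \<in> U \<and> x \<in> insert 0 X \<and> y \<in> insert 0 X}
        \<subseteq> (\<lambda>(x,y). \<bar>x - y\<bar>) ` (\<Union>X\<in>U. insert 0 X \<times> insert 0 X)" by fastforce
  moreover have "finite (\<Union>X\<in>U. insert (0::int) X \<times> insert 0 X)"
    using assms unfolding update_family_def by auto
  ultimately show ?thesis by (meson finite_imageI finite_subset)
qed

lemma r_ge:
  assumes "update_family U" "X \<in> U" "x \<in> insert 0 X"
  shows "\<bar>x\<bar> \<le> range_r U"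
proof -
  have "\<bar>x - 0\<bar> \<in> {\<bar>x - y\<bar> | x y X. X \<in> U \<and> x \<in> insert 0 X \<and> y \<in> insert 0 X}"
    using assms by blast
  thus ?thesis unfolding range_r_def using Max_ge[OF range_fin[OF assms(1)]] by simp
qed

lemma neg_elem:
  assumes "update_family U" "\<not> (\<exists>X\<in>U. X \<subseteq> {1..})" "X \<in> U"
  shows "\<exists>x\<in>X. x < 0 \<and> - range_r U \<le> x"
proof -
  obtain x where x: "x \<in> X" "x < 1" using assms(2,3) by (meson atLeast_iff not_le subsetI)
  have "x \<noteq> 0" using x(1) assms(1,3) unfolding update_family_def by blast
  hence "x < 0" using x(2) by linarith
  moreover have "\<bar>x\<bar> \<le> range_r U" using r_ge[OF assms(1,3)] x(1) by blast
  ultimately show ?thesis using x(1) by auto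
qed

theorem lemma3p1:
  fixes U :: "int set set" and n :: nat and \<Lambda> :: "int set" and \<eta> :: "int \<Rightarrow> bool"
  assumes "update_family U"
    and "\<not> (\<exists>X\<in>U. X \<subseteq> {1..})"
    and "n \<ge> 1"
    and "H U (n - 1)"
    and "P_set U n \<subseteq> \<Lambda>"
    and "\<eta> \<in> V U n \<Lambda> - {ones}"
  shows "\<exists>x \<in> \<Lambda> - P_set U (n - 1). \<not> \<eta> x"
proof (rule ccontr)
  assume nc: "\<not> (\<exists>x \<in> \<Lambda> - P_set U (n - 1). \<not> \<eta> x)"
  from assms(6) obtain p m where pm: "n_legal_path U n \<Lambda> p m" "p 0 = ones" "p m = \<eta>"
    unfolding V_def by blast
  have ne: "\<eta> \<noteq> ones" using assms(6) by blast
  define r where "r = range_r U"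
  define q where "q t = zeros \<Lambda> (p t)" for t
  have m1: "1 \<le> m" using pm(1) unfolding n_legal_path_def by blast
  have cfg: "\<And>t. t \<le> m \<Longrightarrow> config \<Lambda> (p t) \<and> at_most_zeros n \<Lambda> (p t)"
    using pm(1) unfolding n_legal_path_def by blast
  have lm: "\<And>t. t < m \<Longrightarrow> legal_move U \<Lambda> (p t) (p (Suc t))"
    using pm(1) unfolding n_legal_path_def by blast
  have zflip: "\<And>f s z. z \<noteq> s \<Longrightarrow> (z \<in> zeros \<Lambda> (flip f s)) = (z \<in> zeros \<Lambda> f)"
    unfolding zeros_def flip_def by auto
  have ep: "epath r \<Lambda> n q m"
    unfolding epath_def
  proof (intro conjI allI impI)
    fix t assume t: "t \<le> m"
    show "q t \<subseteq> \<Lambda>" unfolding q_def zeros_def by blast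
    show "finite (q t)" using cfg[OF t] unfolding q_def at_most_zeros_def by blast
    show "card (q t) \<le> n" using cfg[OF t] unfolding q_def at_most_zeros_def by blast
  next
    fix t assume t: "t < m"
    show "estep r \<Lambda> (q t) (q (Suc t))"
    proof (cases "p (Suc t) = p t")
      case True thus ?thesis unfolding estep_def q_def by simp
    next
      case False
      then obtain s where s: "s \<in> \<Lambda>" "p (Suc t) = flip (p t) s" "constraint U \<Lambda> (p t) s"
        using lm[OF t] unfolding legal_move_def by blast
      then obtain X where X: "X \<in> U" "\<forall>x\<in>X. s + x \<in> \<Lambda> \<longrightarrow> \<not> p t (s + x)"
        unfolding constraint_def by blast
      obtain x where x: "x \<in> X" "x < 0" "- r \<le> x" using neg_elem[OF assms(1,2) X(1)] r_def by blast
      have "\<forall>z. z \<noteq> s \<longrightarrow> (z \<in> q t) = (z \<in> q (Suc t))" unfolding q_def s(2) using zflip by blast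
      moreover have "s + x \<notin> \<Lambda> \<or> s + x \<in> q t" using X(2) x(1) unfolding q_def zeros_def by blast
      moreover have "s - r \<le> s + x" "s + x < s" using x by auto
      ultimately show ?thesis unfolding estep_def using s(1) by blast
    qed
  qed
  have cm: "config \<Lambda> \<eta>" using cfg[of m] pm(3) by simp
  obtain x0 where "\<not> \<eta> x0" using ne unfolding ones_def by blast
  hence x0: "x0 \<in> q m" using cm pm(3) unfolding config_def q_def zeros_def by blast
  have finm: "finite (q m)" using epath_card[OF ep] by blast
  have qmP: "q m \<subseteq> P_set U (n - 1)" using nc pm(3) unfolding q_def zeros_def by blast
  define L where "L = Min (q m)"
  have L_in: "L \<in> q m" unfolding L_def using finm x0 by (intro Min_in) auto
  have L_le: "\<forall>z\<in>q m. L \<le> z" unfolding L_def using finm by auto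
  have LP: "- a_seq U (n-1) \<le> L" "L \<le> b_seq U (n-1)" using L_in qmP unfolding P_set_def by auto
  have q0: "q 0 = {}" unfolding q_def pm(2) zeros_def ones_def by simp
  have "L \<notin> q 0" using q0 by simp
  from last_time[of "\<lambda>s. L \<notin> q s", OF this, of "m - 1"] obtain t' where
    t': "t' \<le> m - 1" "L \<notin> q t'" "\<forall>s. t' < s \<and> s \<le> m - 1 \<longrightarrow> \<not> L \<notin> q s" by auto
  have tm: "t' < m" using t' m1 by linarith
  have uin: "\<forall>s. t' < s \<and> s \<le> m \<longrightarrow> L \<in> q s"
  proof (intro allI impI)
    fix s assume hs: "t' < s \<and> s \<le> m"
    show "L \<in> q s"
    proof (cases "s = m")
      case True thus ?thesis using L_in by simp
    next
      case False
      hence "s \<le> m - 1" using hs by linarith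
      thus ?thesis using t'(3) hs by blast
    qed
  qed
  have LS: "L \<in> q (Suc t')" using uin tm by auto
  have "p t' \<noteq> p (Suc t')" using LS t'(2) unfolding q_def by metis
  then obtain s where "constraint U \<Lambda> (p t') s"
    using lm[OF tm] unfolding legal_move_def by metis
  then obtain X where "X \<in> U" unfolding constraint_def by blast
  hence r0: "0 \<le> r" using r_ge[OF assms(1), of X 0] unfolding r_def by simp
  have st: "estep r \<Lambda> (q t') (q (Suc t'))" using epath_step[OF ep tm] .
  have "q t' \<noteq> q (Suc t')" using LS t'(2) by blast
  then obtain sf y where sy: "sf \<in> \<Lambda>" "\<forall>x. x \<noteq> sf \<longrightarrow> (x \<in> q t') = (x \<in> q (Suc t'))" "sf - r \<le> y" "y < sf"
    "y \<notin> \<Lambda> \<or> y \<in> q t'" using st unfolding estep_def by blast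
  have sfu: "sf = L" using sy(2) LS t'(2) by metis
  obtain k where nk: "n = Suc k" using assms(3) by (cases n) auto
  have LPk: "- a_seq U k \<le> L" "L \<le> b_seq U k" using LP nk by auto
  have aS: "a_seq U n = 2 * a_seq U k + r" unfolding nk a_seq_def r_def by (simp add: algebra_simps)
  have a0: "0 \<le> a_seq U k" unfolding a_seq_def r_def[symmetric] using r0 by simp
  have bk: "b_seq U k \<le> b_seq U n"
  proof -
    have "int k * 2 ^ (k - 1) \<le> int (Suc k) * 2 ^ (Suc k - 1)"
    proof -
      have "(2::int) ^ (k - 1) \<le> 2 ^ k" by (rule power_increasing) auto
      thus ?thesis by (intro mult_mono) auto
    qed
    hence "r * (int k * 2 ^ (k - 1)) \<le> r * (int (Suc k) * 2 ^ (Suc k - 1))"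
      using r0 by (rule mult_left_mono)
    thus ?thesis unfolding b_seq_def nk r_def[symmetric] by (simp add: mult.assoc)
  qed
  have yr: "L - r \<le> y" "y \<le> L - 1" using sy(3,4) sfu by auto
  have "y \<in> P_set U n" unfolding P_set_def using yr LPk aS a0 bk by auto
  hence yq: "y \<in> q t'" using sy(5) assms(5) by blast
  define W where "W = {- a_seq U n .. L - 1}"
  have p3: "epath r W k (\<lambda>s. q (m - s) \<inter> W) (m - t')"
  proof (rule epath_restrict[OF epath_rev[OF ep less_imp_le[OF tm] order_refl]])
    have "W \<subseteq> {- a_seq U n..b_seq U n}" using LPk bk unfolding W_def by auto
    thus "W \<subseteq> \<Lambda>" using assms(5) unfolding P_set_def by blast
    fix s assume s: "s \<le> m - t'"
    show "card (q (m - s) \<inter> W) \<le> k"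
    proof (cases "t' < m - s")
      case True
      have uv: "L \<in> q (m - s)" using uin True by auto
      have "m - s \<le> m" by simp
      hence fin: "finite (q (m-s))" "card (q (m-s)) \<le> Suc k"
        using epath_card[OF ep] nk by blast+
      have "q (m - s) \<inter> W \<subseteq> q (m-s) - {L}" unfolding W_def by auto
      hence "card (q (m - s) \<inter> W) \<le> card (q (m-s)) - 1" by (rule card_minus_one[OF fin(1) uv])
      thus ?thesis using fin by linarith
    next
      case False
      hence eq: "m - s = t'" using s tm by linarith
      have "Suc t' \<le> m" using tm by linarith
      hence fin: "finite (q (Suc t'))" "card (q (Suc t')) \<le> Suc k"
        using epath_card[OF ep] nk by blast+
      have "q t' \<inter> W \<subseteq> q (Suc t') - {L}" using sy(2) sfu unfolding W_def by auto
      hence "card (q t' \<inter> W) \<le> card (q (Suc t')) - 1" by (rule card_minus_one[OF fin(1) LS])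
      thus ?thesis using fin eq by simp
    qed
  qed
  have q3: "(\<lambda>s. q (m - s) \<inter> W) 0 \<inter> {(- a_seq U n - 1)+1..L-1} = {}" using L_le unfolding W_def by force
  have h3: "{(- a_seq U n - 1)+1..L-1} \<subseteq> W" unfolding W_def by simp
  have "(\<lambda>s. q (m - s) \<inter> W) (m - t') \<inter> {(- a_seq U n - 1) + r*(2^k-1)+1..L-1} = {}"
    by (rule east[OF p3 r0 h3 q3 order_refl])
  moreover have "m - (m - t') = t'" using tm by simp
  moreover have "r*(2^k-1) = a_seq U k" unfolding a_seq_def r_def by simp
  moreover have "y \<in> {(- a_seq U n - 1) + a_seq U k + 1..L-1}" using yr LPk aS by auto
  moreover have "y \<in> W" using yr LPk aS a0 unfolding W_def by auto
  ultimately show False using yq by auto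
qed

end
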